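(* Let $P_n(x)=\sum_{k=0}^{n}\frac{(q^{-n},q^{n+1};q)_k\,(q(1+(q-1)x);q)_k\,q^k}{(q,q,q;q)_k}$ for $n\ge 0$ (this is the $q$-Hahn type family ${}_3\phi_2\!\left(q^{-n},q^{c+d+n+1},q(1+(q-1)x);q^{c+1},q^{d+1};q,q\right)$ with $c=d=0$). Then the $q$-Bernoulli–Carlitz numbers $(\beta_n)_{n\ge0}$ are the moments of the orthogonal polynomials $(P_n)_{n\ge 0}$.
   Context: $q$ is an indeterminate; we work over $\mathbb{Q}(q)$. The $q$-Bernoulli–Carlitz numbers $\beta_n\in\mathbb{Q}(q)$ are defined by: for all $n\ge0$, $q\sum_{k=0}^{n}\binom{n}{k}q^k\beta_k-\beta_n$ equals $q-1$ if $n=0$, $1$ if $n=1$, and $0$ if $n>1$ (so $\beta_0=1$, $\beta_1=-1/(q+1)$). The $q$-Pochhammer symbol is $(a;q)_k=(1-a)(1-qa)\cdots(1-q^{k-1}a)$ and $(a_1,\dots,a_r;q)_k=\prod_i(a_i;q)_k$. A sequence $(m_n)_{n\ge0}$ with $m_0=1$ is called the sequence of moments of a family of polynomials $(P_n)_{n\ge0}$ ($\deg P_n=n$) if the linear functional $L$ on $\mathbb{Q}(q)[x]$ with $L(x^n)=m_n$ makes the family orthogonal: $L(P_mP_n)=0$ for $m\ne n$ and $L(P_n^2)\neq0$. *)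

theory Defs
  imports "HOL-Computational_Algebra.Polynomial" "HOL-Computational_Algebra.Fraction_Field"
begin

type_synonym qrat = "rat poly fract"

definition qv :: qrat where
  "qv = Fract [:0, 1:] 1"

definition qpoch :: "'a::comm_ring_1 \<Rightarrow> 'a \<Rightarrow> nat \<Rightarrow> 'a" where
  "qpoch a b k = (\<Prod>j<k. 1 - b ^ j * a)"

definition bc_rhs :: "nat \<Rightarrow> qrat" where
  "bc_rhs n = (if n = 0 then qv - 1 else if n = 1 then 1 else 0)"

text \<open>q-Bernoulli-Carlitz numbers: the relation
  q * sum_{k=0}^n C(n,k) q^k beta_k - beta_n = bc_rhs n
  solved for beta_n (the coefficient of beta_n is q^(n+1) - 1, nonzero).\<close>
fun bc_beta :: "nat \<Rightarrow> qrat" where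
  "bc_beta n = (bc_rhs n - qv * (\<Sum>k<n. of_nat (n choose k) * qv ^ k * bc_beta k))
                / (qv ^ (n + 1) - 1)"

declare bc_beta.simps [simp del]

definition moment_functional :: "(nat \<Rightarrow> 'a::comm_ring_1) \<Rightarrow> 'a poly \<Rightarrow> 'a" where
  "moment_functional m p = (\<Sum>i\<le>degree p. coeff p i * m i)"

definition is_moment_sequence :: "(nat \<Rightarrow> 'a::field) \<Rightarrow> (nat \<Rightarrow> 'a poly) \<Rightarrow> bool" where
  "is_moment_sequence m P \<longleftrightarrow>
     m 0 = 1 \<and> (\<forall>n. degree (P n) = n) \<and>
     (\<forall>i j. i \<noteq> j \<longrightarrow> moment_functional m (P i * P j) = 0) \<and>
     (\<forall>n. moment_functional m (P n * P n) \<noteq> 0)"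

definition Pfam :: "nat \<Rightarrow> qrat poly" where
  "Pfam n = (\<Sum>k = 0..n.
     smult (qpoch (inverse (qv ^ n)) qv k * qpoch (qv ^ (n + 1)) qv k * qv ^ k
              / (qpoch qv qv k) ^ 3)
           (qpoch ([:qv:] * [:1, qv - 1:]) [:qv:] k))"

end

theory Submission
  imports Defs
begin

lemma qv_pow: "qv ^ m = Fract (monom 1 m) 1"
  by (induction m) (auto simp: qv_def One_fract_def monom_Suc mult.commute)

lemma qv_pow_ne1: "m > 0 \<Longrightarrow> qv ^ m \<noteq> 1"
proof
  assume "m > 0" "qv ^ m = 1"
  hence "Fract (monom (1::rat) m) 1 = Fract 1 1" by (simp add: qv_pow One_fract_def)
  hence "monom (1::rat) m = 1" by (simp add: eq_fract)
  hence "degree (monom (1::rat) m) = 0" by simp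
  with \<open>m>0\<close> show False by (simp add: degree_monom_eq)
qed

lemma qv_pow_ne_m1: "qv ^ m \<noteq> - 1"
proof
  assume "qv ^ m = - 1"
  hence "Fract (monom (1::rat) m) 1 = Fract (-1) 1" by (simp add: qv_pow One_fract_def)
  hence "monom (1::rat) m = -1" by (simp add: eq_fract)
  hence "coeff (monom (1::rat) m) m = coeff (-1) m" by simp
  thus False by (cases m) auto
qed

lemma qv_ne0: "qv \<noteq> 0"
proof
  assume "qv = 0"
  hence "Fract [:0,1::rat:] 1 = Fract 0 1" by (simp add: qv_def Zero_fract_def)
  thus False by (simp add: eq_fract)
qed

lemma qv_pow_ne1': "m > 0 \<Longrightarrow> 1 - qv ^ m \<noteq> 0" "m > 0 \<Longrightarrow> qv ^ m - 1 \<noteq> 0"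
  using qv_pow_ne1[of m] by auto

lemma qv_ne1: "qv \<noteq> 1" using qv_pow_ne1[of 1] by simp

subsection \<open>Linearity of the moment functional\<close>

lemma mf_bound:
  assumes "degree p \<le> N"
  shows "moment_functional m p = (\<Sum>i\<le>N. coeff p i * m i)"
  unfolding moment_functional_def
  by (rule sum.mono_neutral_left) (use assms in \<open>auto simp: coeff_eq_0\<close>)

lemma mf_add: "moment_functional m (p + r) = moment_functional m p + moment_functional m r"
proof -
  let ?N = "max (degree p) (degree r)"
  have "degree (p + r) \<le> ?N" by (rule degree_add_le) auto
  thus ?thesis
    by (simp add: mf_bound[of _ ?N] mf_bound[of p ?N] mf_bound[of r ?N] algebra_simps sum.distrib)
qed

lemma mf_smult: "moment_functional m (smult c p) = c * moment_functional m p"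
  using degree_smult_le[of c p] by (simp add: mf_bound[of "smult c p" "degree p"] mf_bound[of p "degree p"] sum_distrib_left mult.assoc)

lemma mf_minus: "moment_functional m (- p) = - moment_functional m p"
  using mf_smult[of m "-1" p] by simp

lemma mf_diff: "moment_functional m (p - r) = moment_functional m p - moment_functional m r"
  using mf_add[of m p "-r"] mf_minus[of m r] by simp

lemma mf_zero: "moment_functional m 0 = 0"
  by (simp add: moment_functional_def)

lemma smult_sum_right: "smult c (\<Sum>i\<in>A. f i) = (\<Sum>i\<in>A. smult c (f i))"
  by (induction A rule: infinite_finite_induct) (auto simp: smult_add_right)

lemma mf_sum: "moment_functional m (\<Sum>i\<in>A. f i) = (\<Sum>i\<in>A. moment_functional m (f i))"
  by (induction A rule: infinite_finite_induct) (auto simp: mf_add mf_zero)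

lemma mf_monom: "moment_functional m (monom c i) = c * m i"
proof -
  have "moment_functional m (monom c i) = (\<Sum>j\<le>i. coeff (monom c i) j * m j)"
    using degree_monom_le[of c i] by (rule mf_bound)
  also have "\<dots> = coeff (monom c i) i * m i"
    by (subst sum.remove[of _ i]) (auto simp: coeff_monom)
  finally show ?thesis by simp
qed

lemma mf_X_power: "moment_functional m ([:0,1:] ^ i) = m i"
  using mf_monom[of m 1 i] by (simp add: monom_altdef)

lemma mf_one: "moment_functional m 1 = m 0"
  by (simp add: moment_functional_def)

subsection \<open>The fundamental relation\<close>

abbreviation L :: "qrat poly \<Rightarrow> qrat" where "L \<equiv> moment_functional bc_beta"

lemma beta_rel: "qv * L ([:1, qv:] ^ i) - bc_beta i = bc_rhs i"
proof -
  have d: "degree ([:1, qv:] ^ i) \<le> i"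
    by (rule order.trans[OF degree_power_le]) simp
  have "L ([:1, qv:] ^ i) = (\<Sum>k\<le>i. of_nat (i choose k) * qv ^ k * bc_beta k)"
    by (simp add: mf_bound[OF d] coeff_linear_poly_power)
  also have "\<dots> = (\<Sum>k<i. of_nat (i choose k) * qv ^ k * bc_beta k) + qv ^ i * bc_beta i"
    by (simp add: lessThan_Suc_atMost[symmetric])
  finally have 1: "L ([:1, qv:] ^ i) = (\<Sum>k<i. of_nat (i choose k) * qv ^ k * bc_beta k) + qv ^ i * bc_beta i" .
  have nz: "qv ^ (i + 1) - 1 \<noteq> 0" using qv_pow_ne1'(2)[of "i+1"] by simp
  have 2: "bc_beta i * (qv ^ (i + 1) - 1) = bc_rhs i - qv * (\<Sum>k<i. of_nat (i choose k) * qv ^ k * bc_beta k)"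
    using nz by (subst bc_beta.simps) simp
  show ?thesis using 1 2 by (simp add: algebra_simps)
qed

lemma pcompose_X_power: "pcompose ([:0, 1:] ^ i) r = r ^ i"
  by (induction i) (simp_all add: pcompose_mult pcompose_pCons pcompose_1)

lemma FR: "L (smult qv (pcompose f [:1, qv:]) - f) = (qv - 1) * coeff f 0 + coeff f 1"
proof -
  let ?N = "degree f"
  have f: "f = (\<Sum>i\<le>?N. smult (coeff f i) ([:0,1:] ^ i))"
    using poly_as_sum_of_monoms[of f] by (simp add: monom_altdef)
  have "smult qv (pcompose f [:1, qv:]) - f = (\<Sum>i\<le>?N. smult (coeff f i) (smult qv ([:1,qv:] ^ i) - [:0,1:] ^ i))"
    by (subst (1 2) f) (simp add: pcompose_sum pcompose_smult pcompose_X_power smult_sum_right sum_subtractf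
          smult_diff_right algebra_simps)
  hence "L (smult qv (pcompose f [:1, qv:]) - f) = (\<Sum>i\<le>?N. coeff f i * bc_rhs i)"
    by (simp add: mf_sum mf_smult mf_diff beta_rel[symmetric] mf_X_power)
  also have "\<dots> = (\<Sum>i\<le>?N. (if i = 0 then coeff f i * (qv - 1) else 0) + (if i = 1 then coeff f i else 0))"
    by (intro sum.cong) (auto simp: bc_rhs_def)
  also have "\<dots> = (qv - 1) * coeff f 0 + coeff f 1"
    by (simp add: sum.distrib coeff_eq_0 mult.commute)
  finally show ?thesis .
qed


lemma qpoch_0 [simp]: "qpoch a b 0 = 1" by (simp add: qpoch_def)
lemma qpoch_Suc: "qpoch a b (Suc k) = qpoch a b k * (1 - b ^ k * a)"
  by (simp add: qpoch_def)
lemma qpoch_shift: "qpoch a b (Suc k) = (1 - a) * qpoch (b * a) b k"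
  by (induction k) (simp_all add: qpoch_Suc mult_ac)

definition zz :: "qrat poly" where "zz = [:qv:] * [:1, qv - 1:]"
definition phi :: "nat \<Rightarrow> qrat poly" where "phi k = qpoch zz [:qv:] k"
definition cc :: "nat \<Rightarrow> nat \<Rightarrow> qrat" where
  "cc n k = qpoch (inverse (qv ^ n)) qv k * qpoch (qv ^ (n + 1)) qv k * qv ^ k / (qpoch qv qv k) ^ 3"

lemma Pfam_alt: "Pfam n = (\<Sum>k=0..n. smult (cc n k) (phi k))"
  by (simp add: Pfam_def cc_def phi_def zz_def)

lemma cc_zero: "k > n \<Longrightarrow> cc n k = 0"
proof -
  assume "k > n"
  have "qpoch (inverse (qv ^ n)) qv k = 0"
    unfolding qpoch_def using \<open>k > n\<close> qv_ne0
    by (intro prod_zero bexI[of _ n]) auto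
  thus ?thesis by (simp add: cc_def)
qed

lemma cc_0 [simp]: "cc n 0 = 1" by (simp add: cc_def)

lemma Pfam_bound: "n \<le> N \<Longrightarrow> Pfam n = (\<Sum>k\<le>N. smult (cc n k) (phi k))"
  unfolding Pfam_alt atMost_atLeast0
  by (rule sum.mono_neutral_left) (auto simp: cc_zero)

lemma const_pow: "[:c:] ^ k = [:c ^ k:]"
  by (induction k) (simp_all add: mult.commute)

lemma zz_alt: "zz = [:qv, qv * (qv - 1):]"
  by (simp add: zz_def)

lemma phi_0 [simp]: "phi 0 = 1" by (simp add: phi_def)

lemma phi_Suc: "phi (Suc k) = phi k * (1 - smult (qv ^ k) zz)"
  by (simp add: phi_def qpoch_Suc const_pow)

lemma phi_Suc_X: "smult (qv ^ (k + 1) * (qv - 1)) ([:0, 1:] * phi k)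
   = phi k - smult (qv ^ (k + 1)) (phi k) - phi (Suc k)"
  by (simp add: phi_Suc zz_alt algebra_simps smult_add_left)

lemma coeff_phi_0: "coeff (phi k) 0 = qpoch qv qv k"
  by (induction k) (simp_all add: phi_Suc coeff_mult_0 zz_alt qpoch_Suc mult_ac)

lemma pcompose_phi: "pcompose (phi k) [:1, qv:] = (\<Prod>j<k. 1 - smult (qv ^ Suc j) zz)"
proof -
  have "pcompose zz [:1, qv:] = [:qv:] * zz"
    by (simp add: zz_alt pcompose_pCons algebra_simps)
  thus ?thesis
    by (simp add: phi_def qpoch_def pcompose_prod pcompose_diff pcompose_smult pcompose_mult pcompose_1 const_pow
          mult.assoc mult.commute)
qed

lemma phi_Suc_shift: "phi (Suc k) = (1 - zz) * (\<Prod>j<k. 1 - smult (qv ^ Suc j) zz)"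
  unfolding phi_def qpoch_def prod.lessThan_Suc_shift by (simp add: const_pow mult.commute)

lemma aux_Lphi:
  fixes a0 a1 Lf W p q :: "'a::field"
  assumes e1: "q*a1 - Lf = -(q-1)*W" and e2: "p*Lf = p*a0 - a0 + a1"
    and ih: "a0 = (1-q)*W/(1-p)" and nz: "1-p \<noteq> 0" "1-q*p \<noteq> 0"
  shows "a1 = (1-q)*(W*(1-p))/(1-q*p)"
proof -
  have h1: "Lf = q*a1 + (q-1)*W" using e1 by (simp add: algebra_simps)
  have h2: "(1-p)*a0 = (1-q)*W" using ih nz by simp
  have "(1-q*p)*a1 = p*(q-1)*W + (1-p)*a0" using e2 unfolding h1 by (simp add: algebra_simps)
  also have "\<dots> = (1-q)*(W*(1-p))" unfolding h2 by (simp add: algebra_simps)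
  finally show ?thesis using nz by (simp add: field_simps)
qed

lemma L_phi: "L (phi k) = (1 - qv) * qpoch qv qv k / (1 - qv ^ (k + 1))"
proof (induction k)
  case 0
  have "qv - 1 \<noteq> 0" using qv_ne1 by simp
  thus ?case by (simp add: mf_one bc_beta.simps[of 0] bc_rhs_def)
next
  case (Suc k)
  define f where "f = [:0, - (qv - 1):] * phi k"
  have pc: "pcompose f [:1, qv:] = phi (Suc k)"
  proof -
    have h1: "1 - zz = [:1 - qv, - (qv * (qv - 1)):]" by (simp add: zz_alt one_pCons)
    have h2: "pcompose [:0, - (qv - 1):] [:1, qv:] = [:- (qv - 1), - (qv - 1) * qv:]"
      by (simp add: pcompose_pCons)
    have "pcompose [:0, - (qv - 1):] [:1, qv:] = 1 - zz" unfolding h1 h2 by (simp add: algebra_simps)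
    thus ?thesis by (simp only: f_def pcompose_mult pcompose_phi phi_Suc_shift)
  qed
  have c0: "coeff f 0 = 0" by (simp add: f_def)
  have c1: "coeff f 1 = - (qv - 1) * qpoch qv qv k"
    by (simp add: f_def coeff_phi_0 coeff_pCons_0 mult_ac)
  have "L (smult qv (phi (Suc k)) - f) = - (qv - 1) * qpoch qv qv k"
    using FR[of f] unfolding pc c0 c1 by (simp add: algebra_simps)
  hence e1: "qv * L (phi (Suc k)) - L f = - (qv - 1) * qpoch qv qv k"
    by (simp add: mf_diff mf_smult)
  have fX: "f = smult (- (qv - 1)) ([:0, 1:] * phi k)" by (simp add: f_def)
  have "smult (qv ^ (k + 1)) f = - smult (qv ^ (k + 1) * (qv - 1)) ([:0, 1:] * phi k)"
    by (simp only: fX smult_smult mult_minus_right smult_minus_left smult_minus_right)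
  also have "\<dots> = - (phi k - smult (qv ^ (k + 1)) (phi k) - phi (Suc k))"
    by (simp only: phi_Suc_X)
  finally have "smult (qv ^ (k + 1)) f = - (phi k - smult (qv ^ (k + 1)) (phi k) - phi (Suc k))" .
  hence "qv ^ (k + 1) * L f = - (L (phi k) - qv ^ (k + 1) * L (phi k) - L (phi (Suc k)))"
    by (metis mf_diff mf_minus mf_smult)
  hence e2: "qv ^ (k + 1) * L f = qv ^ (k + 1) * L (phi k) - L (phi k) + L (phi (Suc k))"
    by simp
  have nz1: "1 - qv ^ (k + 1) \<noteq> 0" "1 - qv * qv ^ (k + 1) \<noteq> 0" using qv_pow_ne1'(1)[of "k+1"] qv_pow_ne1'(1)[of "k+2"] by auto
  have "L (phi (Suc k)) = (1-qv)*(qpoch qv qv k*(1-qv ^ (k + 1)))/(1-qv*qv ^ (k + 1))"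
    by (rule aux_Lphi[OF e1 e2 Suc.IH nz1])
  thus ?case by (simp add: qpoch_Suc mult.commute)
qed


lemma tele_core0:
  fixes q a b U V W c d ia :: "'a::field"
  assumes nz: "a\<noteq>0" "W\<noteq>0" "c\<noteq>0" "d\<noteq>0" and ia: "ia * a = 1" and hc: "c = 1-b*q" and hd: "d = (a-1)*(q*a-1)"
  shows "a*c*(q-1)*(U*(1-b*ia))*(V*(1-b*(q*a)))/((W*c)^2*d)
     = a*(1-b)*(q-1)*U*V/(W^2*d) + U*V*b/W^3*((1-q)*W/c)"
proof -
  have "a*c*(q-1)*(U*(1-b*ia))*(V*(1-b*(q*a)))/((W*c)^2*d) = (q-1)*U*V*((a-b*(ia*a))*(1-b*(q*a)))/(W^2*c*d)"
    using nz by (simp add: field_simps power2_eq_square)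
  also have "\<dots> = (q-1)*U*V*((a-b)*(1-b*(q*a)))/(W^2*c*d)" by (simp add: ia)
  also have "\<dots> = a*(1-b)*(q-1)*U*V/(W^2*d) + U*V*b/W^3*((1-q)*W/c)"
    using nz apply (simp add: field_simps power2_eq_square power3_eq_cube)
    unfolding hc hd by algebra
  finally show ?thesis .
qed
definition GG :: "nat \<Rightarrow> nat \<Rightarrow> qrat" where
  "GG n K = qv^n*(1-qv^K)*(qv-1)*qpoch (inverse (qv^n)) qv K*qpoch (qv*qv^n) qv K
      /((qpoch qv qv K)^2*((qv^n-1)*(qv*qv^n-1)))"

lemma qpoch_qv_nz: "qpoch qv qv K \<noteq> 0"
  unfolding qpoch_def using qv_pow_ne1'(1)[of "Suc _"] by (auto simp: mult.commute)

lemma tele: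
  assumes "n \<ge> 1"
  shows "(\<Sum>k<K. cc n k * L (phi k)) = GG n K"
proof (induction K)
  case 0 thus ?case by (simp add: GG_def)
next
  case (Suc K)
  define U where "U = qpoch (inverse (qv^n)) qv K"
  define V where "V = qpoch (qv*qv^n) qv K"
  define W where "W = qpoch qv qv K"
  define c where "c = 1 - qv^K*qv"
  define d where "d = (qv^n-1)*(qv*qv^n-1)"
  have nz: "qv^n\<noteq>0" "W\<noteq>0" "c\<noteq>0" "d\<noteq>0"
    using qv_ne0 qpoch_qv_nz qv_pow_ne1'[of "Suc K"] qv_pow_ne1'[of n] qv_pow_ne1'[of "Suc n"] assms
    by (auto simp: mult.commute W_def c_def d_def)
  have ia: "inverse (qv^n) * qv^n = 1" using nz by simp
  have e1: "GG n (Suc K) = qv^n*c*(qv-1)*(U*(1-qv^K*inverse (qv^n)))*(V*(1-qv^K*(qv*qv^n)))/((W*c)^2*d)"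
    unfolding GG_def qpoch_Suc U_def V_def W_def c_def d_def by (simp add: mult.commute)
  have e2: "cc n K * L (phi K) = U*V*qv^K/W^3*((1-qv)*W/c)"
    unfolding cc_def L_phi U_def V_def W_def c_def by (simp add: mult.commute)
  have e3: "GG n K = qv^n*(1-qv^K)*(qv-1)*U*V/(W^2*d)"
    unfolding GG_def U_def V_def W_def d_def ..
  have "(\<Sum>k<Suc K. cc n k * L (phi k)) = GG n K + cc n K * L (phi K)"
    using Suc.IH by simp
  also have "\<dots> = GG n (Suc K)"
    unfolding e1 e2 e3 by (rule tele_core0[OF nz ia c_def d_def, symmetric])
  finally show ?case .
qed

lemma L_Pfam: "n \<ge> 1 \<Longrightarrow> L (Pfam n) = 0"
proof -
  assume n: "n \<ge> 1"
  have "L (Pfam n) = (\<Sum>k<Suc n. cc n k * L (phi k))"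
    by (simp add: Pfam_bound[of n n] mf_sum mf_smult lessThan_Suc_atMost)
  also have "\<dots> = GG n (Suc n)" by (rule tele[OF n])
  also have "qpoch (inverse (qv ^ n)) qv (Suc n) = 0"
    unfolding qpoch_def using qv_ne0 by (intro prod_zero bexI[of _ n]) auto
  hence "GG n (Suc n) = 0" by (simp add: GG_def)
  finally show ?thesis .
qed


lemma core2_poly:
  fixes q a b :: "'a::field"
  shows "((1-q*a^2)*(1-q^2*a^2)*(1+a))*((1-q^2*b)*q*((a-1)*(a-q*b)*(1-q*a)*(1-q^2*a*b)) - q*(1-q^2*b)^3*a*((a-1)*(1-q*a)))
   = ((1-q*a)^3*(1+a))*(q^2*b*((q*a-1)*(a-1)*(1-q^2*a*b)*(1-q^3*a*b)))
     - ((1-q*a)^3*(1+a) + (-q*a*(1-a)^2*(1-q^2*a^2)))*(q^3*b*((a-1)*(a-q*b)*(1-q*a)*(1-q^2*a*b)))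
     + (-q*a*(1-a)^2*(1-q^2*a^2))*(q^3*b*((a-q*b)*(a-q^2*b)*(1-a)*(1-q*a)))"
  by algebra

lemma core2:
  fixes q a ia b s E A C :: "'a::field"
  assumes ia: "ia = inverse a" and s: "s = inverse (q^2*b)" and nz: "q\<noteq>0" "a\<noteq>0" "b\<noteq>0" "1-q^2*b\<noteq>0"
  and E: "E = (1-q*a^2)*(1-q^2*a^2)*(1+a)" and A: "A = (1-q*a)^3*(1+a)" and C: "C = -q*a*(1-a)^2*(1-q^2*a^2)"
  shows "E*((s-1)*((1-ia)*(1-q*b*ia)*(1-q*a)*(1-q^2*a*b)/(1-q^2*b)^3) - s*((1-ia)*(1-q*a)))
   = A*((1-ia/q)*(1-ia)*(1-q^2*a*b)*(1-q^3*a*b)/(1-q^2*b)^3)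
     - (A+C)*((1-ia)*(1-q*b*ia)*(1-q*a)*(1-q^2*a*b)/(1-q^2*b)^3)
     + C*((1-q*b*ia)*(1-q^2*b*ia)*(1-a)*(1-q*a)/(1-q^2*b)^3)"
proof -
  define M where "M = (1-q^2*b)^3 * a^2 * q^3 * b"
  have M: "M \<noteq> 0" using nz by (simp add: M_def)
  have t1: "M*((s-1)*((1-ia)*(1-q*b*ia)*(1-q*a)*(1-q^2*a*b)/(1-q^2*b)^3)) = (1-q^2*b)*q*((a-1)*(a-q*b)*(1-q*a)*(1-q^2*a*b))"
    using nz by (simp add: M_def ia s field_simps; algebra)
  have t2: "M*(s*((1-ia)*(1-q*a))) = q*(1-q^2*b)^3*a*((a-1)*(1-q*a))"
    using nz by (simp add: M_def ia s field_simps; algebra)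
  have t3: "M*((1-ia/q)*(1-ia)*(1-q^2*a*b)*(1-q^3*a*b)/(1-q^2*b)^3) = q^2*b*((q*a-1)*(a-1)*(1-q^2*a*b)*(1-q^3*a*b))"
    using nz by (simp add: M_def ia s field_simps; algebra)
  have t4: "M*((1-ia)*(1-q*b*ia)*(1-q*a)*(1-q^2*a*b)/(1-q^2*b)^3) = q^3*b*((a-1)*(a-q*b)*(1-q*a)*(1-q^2*a*b))"
    using nz by (simp add: M_def ia s field_simps; algebra)
  have t5: "M*((1-q*b*ia)*(1-q^2*b*ia)*(1-a)*(1-q*a)/(1-q^2*b)^3) = q^3*b*((a-q*b)*(a-q^2*b)*(1-a)*(1-q*a))"
    using nz by (simp add: M_def ia s field_simps; algebra)
  have "M * (E*((s-1)*((1-ia)*(1-q*b*ia)*(1-q*a)*(1-q^2*a*b)/(1-q^2*b)^3) - s*((1-ia)*(1-q*a))))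
      = E*(M*((s-1)*((1-ia)*(1-q*b*ia)*(1-q*a)*(1-q^2*a*b)/(1-q^2*b)^3)) - M*(s*((1-ia)*(1-q*a))))"
    by (simp add: algebra_simps)
  also have "\<dots> = A*(M*((1-ia/q)*(1-ia)*(1-q^2*a*b)*(1-q^3*a*b)/(1-q^2*b)^3))
     - (A+C)*(M*((1-ia)*(1-q*b*ia)*(1-q*a)*(1-q^2*a*b)/(1-q^2*b)^3))
     + C*(M*((1-q*b*ia)*(1-q^2*b*ia)*(1-a)*(1-q*a)/(1-q^2*b)^3))"
    unfolding t1 t2 t3 t4 t5 E A C by (rule core2_poly)
  also have "\<dots> = M * (A*((1-ia/q)*(1-ia)*(1-q^2*a*b)*(1-q^3*a*b)/(1-q^2*b)^3)
     - (A+C)*((1-ia)*(1-q*b*ia)*(1-q*a)*(1-q^2*a*b)/(1-q^2*b)^3)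
     + C*((1-q*b*ia)*(1-q^2*b*ia)*(1-a)*(1-q*a)/(1-q^2*b)^3))"
    by (simp add: algebra_simps)
  finally show ?thesis using M by simp
qed

lemma core1_poly:
  fixes q a :: "'a::field"
  shows "((1-q*a^2)*(1-q^2*a^2)*(1+a))*((1-q)*q*((a-1)*(1-q*a)*q) - q^2*(1-q)^3*a)
   = ((1-q*a)^3*(1+a))*(q*((q*a-1)*(1-q^2*a)*q))
     - ((1-q*a)^3*(1+a) + (-q*a*(1-a)^2*(1-q^2*a^2)))*(q^2*((a-1)*(1-q*a)*q))
     + (-q*a*(1-a)^2*(1-q^2*a^2))*(q^2*((a-q)*(1-a)*q))"
  by algebra

lemma core1:
  fixes q a ia s E A C :: "'a::field"
  assumes ia: "ia = inverse a" and s: "s = inverse q" and nz: "q\<noteq>0" "a\<noteq>0" "1-q\<noteq>0"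
  and E: "E = (1-q*a^2)*(1-q^2*a^2)*(1+a)" and A: "A = (1-q*a)^3*(1+a)" and C: "C = -q*a*(1-a)^2*(1-q^2*a^2)"
  shows "E*((s-1)*((1-ia)*(1-q*a)*q/(1-q)^3) - q*s*1)
   = A*((1-ia/q)*(1-q^2*a)*q/(1-q)^3)
     - (A+C)*((1-ia)*(1-q*a)*q/(1-q)^3)
     + C*((1-q*ia)*(1-a)*q/(1-q)^3)"
proof -
  define M where "M = (1-q)^3 * a * q^2"
  have M: "M \<noteq> 0" using nz by (simp add: M_def)
  have t1: "M*((s-1)*((1-ia)*(1-q*a)*q/(1-q)^3)) = (1-q)*q*((a-1)*(1-q*a)*q)"
    using nz by (simp add: M_def ia s field_simps; algebra)
  have t2: "M*(q*s*1) = q^2*(1-q)^3*a"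
    using nz by (simp add: M_def ia s field_simps)
  have t3: "M*((1-ia/q)*(1-q^2*a)*q/(1-q)^3) = q*((q*a-1)*(1-q^2*a)*q)"
    using nz by (simp add: M_def ia s field_simps; algebra)
  have t4: "M*((1-ia)*(1-q*a)*q/(1-q)^3) = q^2*((a-1)*(1-q*a)*q)"
    using nz by (simp add: M_def ia s field_simps; algebra)
  have t5: "M*((1-q*ia)*(1-a)*q/(1-q)^3) = q^2*((a-q)*(1-a)*q)"
    using nz by (simp add: M_def ia s field_simps; algebra)
  have "M * (E*((s-1)*((1-ia)*(1-q*a)*q/(1-q)^3) - q*s*1))
      = E*(M*((s-1)*((1-ia)*(1-q*a)*q/(1-q)^3)) - M*(q*s*1))"
    by (simp add: algebra_simps)
  also have "\<dots> = A*(M*((1-ia/q)*(1-q^2*a)*q/(1-q)^3))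
     - (A+C)*(M*((1-ia)*(1-q*a)*q/(1-q)^3))
     + C*(M*((1-q*ia)*(1-a)*q/(1-q)^3))"
    unfolding t1 t2 t3 t4 t5 E A C by (rule core1_poly)
  also have "\<dots> = M * (A*((1-ia/q)*(1-q^2*a)*q/(1-q)^3)
     - (A+C)*((1-ia)*(1-q*a)*q/(1-q)^3)
     + C*((1-q*ia)*(1-a)*q/(1-q)^3))"
    by (simp add: algebra_simps)
  finally show ?thesis using M by simp
qed

lemma scaleK:
  fixes E A C K s Z1 Z2 Z3 Z4 :: "'a::comm_ring_1"
  assumes "E*((s-1)*Z1 - s*Z2) = A*Z3 - (A+C)*Z1 + C*Z4"
  shows "E*((s-1)*(K*Z1) - s*(K*Z2)) = A*(K*Z3) - (A+C)*(K*Z1) + C*(K*Z4)"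
proof -
  have "E*((s-1)*(K*Z1) - s*(K*Z2)) = K*(E*((s-1)*Z1 - s*Z2))" by (simp add: algebra_simps)
  also have "\<dots> = K*(A*Z3 - (A+C)*Z1 + C*Z4)" by (simp only: assms)
  also have "\<dots> = A*(K*Z3) - (A+C)*(K*Z1) + C*(K*Z4)" by (simp add: algebra_simps)
  finally show ?thesis .
qed

lemma hcn_gen:
  fixes q a ia b Y Z W :: "'a::field"
  assumes nz: "W\<noteq>0" "1-q*b\<noteq>0" "1-q^2*b\<noteq>0"
  shows "((1-ia)*Y*(1-b*(q*ia))) * ((1-q*a)*Z*(1-b*(q*(q*a)))) * (q^2*b) / (W*(1-b*q)*(1-q*b*q))^3
     = (Y*Z*(q^2*b)/(W^3*(1-q*b)^3)) * ((1-ia)*(1-q*b*ia)*(1-q*a)*(1-q^2*a*b)/(1-q^2*b)^3)"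
by (simp only: times_divide_times_eq) (simp add: mult_ac power2_eq_square power3_eq_cube power_mult_distrib)

lemma hcp_gen:
  fixes q a ia b Y Z W :: "'a::field"
  assumes nz: "W\<noteq>0" "1-q*b\<noteq>0" "1-q^2*b\<noteq>0"
  shows "((1-ia/q)*(1-ia)*Y) * (Z*(1-b*(q*(q*a)))*(1-q*b*(q*(q*a)))) * (q^2*b) / (W*(1-b*q)*(1-q*b*q))^3
     = (Y*Z*(q^2*b)/(W^3*(1-q*b)^3)) * ((1-ia/q)*(1-ia)*(1-q^2*a*b)*(1-q^3*a*b)/(1-q^2*b)^3)"
by (simp only: times_divide_times_eq) (simp add: mult_ac power2_eq_square power3_eq_cube power_mult_distrib)

lemma hcm_gen:
  fixes q a ia b Y Z W :: "'a::field"
  assumes nz: "W\<noteq>0" "1-q*b\<noteq>0" "1-q^2*b\<noteq>0"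
  shows "(Y*(1-b*(q*ia))*(1-q*b*(q*ia))) * ((1-a)*(1-q*a)*Z) * (q^2*b) / (W*(1-b*q)*(1-q*b*q))^3
     = (Y*Z*(q^2*b)/(W^3*(1-q*b)^3)) * ((1-q*b*ia)*(1-q^2*b*ia)*(1-a)*(1-q*a)/(1-q^2*b)^3)"
by (simp only: times_divide_times_eq) (simp add: mult_ac power2_eq_square power3_eq_cube power_mult_distrib)

lemma hck_gen:
  fixes q a ia b Y Z W :: "'a::field"
  assumes nz: "W\<noteq>0" "1-q*b\<noteq>0" "q\<noteq>0"
  shows "q * (((1-ia)*Y) * ((1-q*a)*Z) * (q*b) / (W*(1-b*q))^3)
     = (Y*Z*(q^2*b)/(W^3*(1-q*b)^3)) * ((1-ia)*(1-q*a))"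
by (simp only: times_divide_eq_left times_divide_eq_right) (simp add: mult_ac power2_eq_square power_mult_distrib)


lemma qp_SS1: "qpoch x b (Suc (Suc j)) = qpoch x b j * (1 - b^j*x) * (1 - b^Suc j*x)"
  by (simp add: qpoch_Suc)
lemma qp_SS2: "qpoch x b (Suc (Suc j)) = (1-x) * qpoch (b*x) b j * (1 - b^j*(b*x))"
  by (subst qpoch_shift) (simp add: qpoch_Suc mult_ac)
lemma qp_SS3: "qpoch x b (Suc (Suc j)) = (1-x) * (1-b*x) * qpoch (b*(b*x)) b j"
  by (simp add: qpoch_shift)

lemma zz_phi: "zz * phi k = smult (inverse (qv^k)) (phi k - phi (Suc k))"
proof -
  have "phi k - phi (Suc k) = smult (qv^k) (zz * phi k)"
    by (simp add: phi_Suc algebra_simps)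
  thus ?thesis using qv_ne0 by simp
qed

lemma step_gen:
  fixes z p p' :: "'a::field poly"
  assumes "z * p = smult i (p - p')"
  shows "(z - 1) * smult c p = smult (c*(i-1)) p - smult (c*i) p'"
proof -
  have "(z - 1) * smult c p = smult c (z * p) - smult c p"
    by (metis left_diff_distrib mult_1 mult_smult_right)
  also have "\<dots> = smult c (smult i (p - p')) - smult c p" by (simp only: assms)
  also have "\<dots> = smult (c*(i-1)) p - smult (c*i) p'"
    by (simp add: smult_diff_right smult_diff_left algebra_simps)
  finally show ?thesis .
qed

definition dd :: "(nat \<Rightarrow> qrat) \<Rightarrow> nat \<Rightarrow> qrat" where
  "dd c k = (inverse (qv^k) - 1) * c k - (if k = 0 then 0 else qv * inverse (qv^k) * c (k - 1))"

lemma zm1_sum: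
  "(zz - 1) * (\<Sum>k\<le>N. smult (c k) (phi k))
     = (\<Sum>k\<le>N. smult (dd c k) (phi k)) - smult (c N * inverse (qv^N)) (phi (Suc N))"
proof (induction N)
  case 0
  show ?case by (simp add: dd_def phi_Suc smult_diff_right)
next
  case (Suc N)
  have st: "(zz - 1) * smult (c (Suc N)) (phi (Suc N))
     = smult (c (Suc N) * (inverse (qv^Suc N) - 1)) (phi (Suc N)) - smult (c (Suc N) * inverse (qv^Suc N)) (phi (Suc (Suc N)))"
    by (rule step_gen[OF zz_phi])
  have h: "qv * inverse (qv ^ Suc N) = inverse (qv^N)" using qv_ne0 by (simp add: field_simps)
  have dS: "smult (dd c (Suc N)) (phi (Suc N)) = smult (c (Suc N) * (inverse (qv^Suc N) - 1)) (phi (Suc N)) - smult (c N * inverse (qv^N)) (phi (Suc N))"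
  proof -
    have "dd c (Suc N) = c (Suc N) * (inverse (qv^Suc N) - 1) - c N * inverse (qv^N)"
      unfolding dd_def h[symmetric] by (simp add: mult_ac)
    thus ?thesis by (simp add: smult_diff_left)
  qed
  show ?case
    unfolding sum.atMost_Suc distrib_left Suc.IH st dS by (simp add: algebra_simps)
qed

definition EE :: "nat \<Rightarrow> qrat" where "EE n = (1-qv*(qv^n)^2)*(1-qv^2*(qv^n)^2)*(1+qv^n)"
definition AA :: "nat \<Rightarrow> qrat" where "AA n = (1-qv*qv^n)^3*(1+qv^n)"
definition CC :: "nat \<Rightarrow> qrat" where "CC n = -qv*qv^n*(1-qv^n)^2*(1-qv^2*(qv^n)^2)"

lemma coeff_id_big:
  assumes n: "n = Suc m"
  shows "EE n * dd (cc n) (Suc (Suc j)) = AA n * cc (Suc n) (Suc (Suc j)) - (AA n + CC n) * cc n (Suc (Suc j)) + CC n * cc m (Suc (Suc j))"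
proof -
  define a where "a = qv^n"
  define ia where "ia = inverse a"
  define b where "b = qv^j"
  define s where "s = inverse (qv^2*b)"
  define Y where "Y = qpoch (qv*ia) qv j"
  define Z where "Z = qpoch (qv*(qv*a)) qv j"
  define W where "W = qpoch qv qv j"
  have nz: "qv\<noteq>0" "a\<noteq>0" "b\<noteq>0" "W\<noteq>0" "1-qv*b\<noteq>0" "1-qv^2*b\<noteq>0"
    using qv_ne0 qpoch_qv_nz qv_pow_ne1'(1)[of "Suc j"] qv_pow_ne1'(1)[of "Suc (Suc j)"]
    by (auto simp: a_def b_def W_def power2_eq_square mult_ac)
  have U_n: "qpoch (inverse (qv^n)) qv (Suc (Suc j)) = (1-ia)*Y*(1-b*(qv*ia))"
    unfolding qp_SS2 by (simp add: Y_def ia_def a_def b_def)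
  have U_n1: "qpoch (inverse (qv^n)) qv (Suc j) = (1-ia)*Y"
    unfolding qpoch_shift by (simp add: Y_def ia_def a_def)
  have U_Sn: "qpoch (inverse (qv^Suc n)) qv (Suc (Suc j)) = (1-ia/qv)*(1-ia)*Y"
  proof -
    have "inverse (qv^Suc n) = ia/qv" "qv*(ia/qv) = ia" using nz by (simp_all add: ia_def a_def field_simps)
    thus ?thesis unfolding qp_SS3 by (simp add: Y_def)
  qed
  have U_m: "qpoch (inverse (qv^m)) qv (Suc (Suc j)) = Y*(1-b*(qv*ia))*(1-qv*b*(qv*ia))"
  proof -
    have "inverse (qv^m) = qv*ia" using nz by (simp add: ia_def a_def n field_simps)
    thus ?thesis unfolding qp_SS1 by (simp add: Y_def b_def)
  qed
  have V_n: "qpoch (qv^(n+1)) qv (Suc (Suc j)) = (1-qv*a)*Z*(1-b*(qv*(qv*a)))"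
    unfolding qp_SS2 by (simp add: Z_def a_def b_def)
  have V_n1: "qpoch (qv^(n+1)) qv (Suc j) = (1-qv*a)*Z"
    unfolding qpoch_shift by (simp add: Z_def a_def)
  have V_Sn: "qpoch (qv^(Suc n+1)) qv (Suc (Suc j)) = Z*(1-b*(qv*(qv*a)))*(1-qv*b*(qv*(qv*a)))"
    unfolding qp_SS1 by (simp add: Z_def a_def b_def)
  have V_m: "qpoch (qv^(m+1)) qv (Suc (Suc j)) = (1-a)*(1-qv*a)*Z"
    unfolding qp_SS3 by (simp add: Z_def a_def n)
  have W2: "qpoch qv qv (Suc (Suc j)) = W*(1-b*qv)*(1-qv*b*qv)"
    unfolding qp_SS1 by (simp add: W_def b_def)
  have W1: "qpoch qv qv (Suc j) = W*(1-b*qv)"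
    unfolding qpoch_Suc by (simp add: W_def b_def)
  have P2: "qv^Suc (Suc j) = qv^2*b" "qv^Suc j = qv*b" by (simp_all add: b_def power2_eq_square)
  define K where "K = Y*Z*(qv^2*b)/(W^3*(1-qv*b)^3)"
  have hcn: "cc n (Suc (Suc j)) = K*((1-ia)*(1-qv*b*ia)*(1-qv*a)*(1-qv^2*a*b)/(1-qv^2*b)^3)"
    unfolding cc_def U_n V_n W2 P2 K_def by (rule hcn_gen[OF nz(4-6)])
  have hcp: "cc (Suc n) (Suc (Suc j)) = K*((1-ia/qv)*(1-ia)*(1-qv^2*a*b)*(1-qv^3*a*b)/(1-qv^2*b)^3)"
    unfolding cc_def U_Sn V_Sn W2 P2 K_def by (rule hcp_gen[OF nz(4-6)])
  have hcm: "cc m (Suc (Suc j)) = K*((1-qv*b*ia)*(1-qv^2*b*ia)*(1-a)*(1-qv*a)/(1-qv^2*b)^3)"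
    unfolding cc_def U_m V_m W2 P2 K_def by (rule hcm_gen[OF nz(4-6)])
  have hck: "qv * cc n (Suc j) = K*((1-ia)*(1-qv*a))"
    unfolding cc_def U_n1 V_n1 W1 P2 K_def by (rule hck_gen[OF nz(4,5,1)])
  have hdd: "dd (cc n) (Suc (Suc j)) = (s-1)*cc n (Suc (Suc j)) - s*(qv*cc n (Suc j))"
    unfolding dd_def s_def P2 by (simp add: mult_ac)
  have EE: "EE n = (1-qv*a^2)*(1-qv^2*a^2)*(1+a)" unfolding EE_def a_def ..
  have AA: "AA n = (1-qv*a)^3*(1+a)" unfolding AA_def a_def ..
  have CC: "CC n = -qv*a*(1-a)^2*(1-qv^2*a^2)" unfolding CC_def a_def ..
  show ?thesis unfolding hdd hcn hcp hcm hck
    by (rule scaleK[OF core2[OF ia_def s_def nz(1-3) nz(6) EE AA CC]])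
qed


lemma coeff_id:
  "EE n * dd (cc n) k = AA n * cc (Suc n) k - (AA n + CC n) * cc n k + CC n * cc (n - 1) k"
proof (cases k)
  case 0 thus ?thesis by (simp add: dd_def algebra_simps)
next
  case (Suc k')
  show ?thesis
  proof (cases k')
    case 0
    note k1 = \<open>k = Suc k'\<close>[unfolded 0]
    have q1: "1 - qv \<noteq> 0" using qv_ne1 by simp
    show ?thesis
    proof (cases n)
      case 0
      have c01: "cc 0 1 = 0" by (rule cc_zero) simp
      have c11: "cc 1 1 = (1 - inverse qv)*(1 - qv*qv)*qv/(1-qv)^3"
        by (simp add: cc_def qpoch_def)
      have d: "dd (cc 0) 1 = -1" using qv_ne0 c01 by (simp add: dd_def)
      have A0: "AA 0 * cc 1 1 = 2*(qv-1)*(1-qv*qv)"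
        unfolding c11 AA_def using q1 qv_ne0 by (simp add: field_simps)
      have E0: "EE 0 = (1-qv)*(1-qv*qv)*2" by (simp add: EE_def power2_eq_square)
      have "EE 0 * dd (cc 0) 1 = AA 0 * cc 1 1"
        unfolding d A0 E0 by (simp add: algebra_simps)
      thus ?thesis using c01 by (simp add: k1 0 CC_def)
    next
      case (Suc m)
      define a where "a = qv^n"
      have a: "a \<noteq> 0" using qv_ne0 by (simp add: a_def)
      have cn1: "cc n 1 = (1-inverse a)*(1-qv*a)*qv/(1-qv)^3"
        by (simp add: cc_def qpoch_def a_def)
      have cp1: "cc (Suc n) 1 = (1-inverse a/qv)*(1-qv^2*a)*qv/(1-qv)^3"
        using qv_ne0 by (simp add: cc_def qpoch_def a_def field_simps power2_eq_square)
      have cm1: "cc m 1 = (1-qv*inverse a)*(1-a)*qv/(1-qv)^3"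
        using qv_ne0 by (simp add: cc_def qpoch_def a_def Suc field_simps)
      have hdd: "dd (cc n) 1 = (inverse qv - 1)*cc n 1 - qv*inverse qv*1"
        by (simp add: dd_def)
      have EE: "EE n = (1-qv*a^2)*(1-qv^2*a^2)*(1+a)" unfolding EE_def a_def ..
      have AA: "AA n = (1-qv*a)^3*(1+a)" unfolding AA_def a_def ..
      have CC: "CC n = -qv*a*(1-a)^2*(1-qv^2*a^2)" unfolding CC_def a_def ..
      have "EE n * dd (cc n) 1 = AA n * cc (Suc n) 1 - (AA n + CC n) * cc n 1 + CC n * cc m 1"
        unfolding hdd cn1 cp1 cm1
        by (rule core1[OF refl refl qv_ne0 a q1 EE AA CC])
      thus ?thesis by (simp add: k1 Suc)
    qed
  next
    case (Suc j)
    note k2 = \<open>k = Suc k'\<close>[unfolded Suc]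
    show ?thesis
    proof (cases n)
      case 0
      have "cc 0 (Suc (Suc j)) = 0" "cc 1 (Suc (Suc j)) = 0" "cc 0 (Suc j) = 0"
        by (simp_all add: cc_zero)
      thus ?thesis by (simp add: k2 0 dd_def)
    next
      case (Suc m)
      thus ?thesis using coeff_id_big[OF Suc, of j] by (simp add: k2)
    qed
  qed
qed

lemma recur:
  "smult (EE n) ((zz - 1) * Pfam n)
     = smult (AA n) (Pfam (Suc n)) - smult (AA n + CC n) (Pfam n) + smult (CC n) (Pfam (n - 1))"
proof -
  let ?N = "Suc n"
  have P: "\<And>m. m \<le> ?N \<Longrightarrow> Pfam m = (\<Sum>k\<le>?N. smult (cc m k) (phi k))"
    by (rule Pfam_bound)
  have "(zz - 1) * Pfam n = (\<Sum>k\<le>?N. smult (dd (cc n) k) (phi k))"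
    unfolding P[of n, OF le_SucI[OF order.refl]] zm1_sum by (simp add: cc_zero)
  hence "smult (EE n) ((zz - 1) * Pfam n) = (\<Sum>k\<le>?N. smult (EE n * dd (cc n) k) (phi k))"
    by (simp only: smult_sum_right smult_smult)
  also have "\<dots> = (\<Sum>k\<le>?N. smult (AA n * cc (Suc n) k - (AA n + CC n) * cc n k + CC n * cc (n - 1) k) (phi k))"
    by (simp add: coeff_id)
  also have "\<dots> = smult (AA n) (\<Sum>k\<le>?N. smult (cc (Suc n) k) (phi k))
      - smult (AA n + CC n) (\<Sum>k\<le>?N. smult (cc n k) (phi k)) + smult (CC n) (\<Sum>k\<le>?N. smult (cc (n - 1) k) (phi k))"
    by (simp only: smult_add_left smult_diff_left sum.distrib sum_subtractf smult_sum_right smult_smult)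
  also have "\<dots> = smult (AA n) (Pfam (Suc n)) - smult (AA n + CC n) (Pfam n) + smult (CC n) (Pfam (n - 1))"
    by (simp add: P)
  finally show ?thesis .
qed


lemma pow_aux: "qv*(qv^n)^2 = qv^Suc (n*2)" "qv^2*(qv^n)^2 = qv^(Suc (Suc (n*2)))"
  by (simp_all add: power_mult power2_eq_square)

lemma EE_nz: "EE n \<noteq> 0"
proof -
  have "1 + qv^n \<noteq> 0" using qv_pow_ne_m1[of n] by (metis add.commute add_eq_0_iff)
  thus ?thesis unfolding EE_def pow_aux using qv_pow_ne1'(1)[of "Suc (n*2)"] qv_pow_ne1'(1)[of "Suc (Suc (n*2))"]
    by simp
qed

lemma AA_nz: "AA n \<noteq> 0"
proof -
  have "1 + qv^n \<noteq> 0" using qv_pow_ne_m1[of n] by (metis add.commute add_eq_0_iff)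
  moreover have "1 - qv*qv^n \<noteq> 0" using qv_pow_ne1'(1)[of "Suc n"] by simp
  ultimately show ?thesis unfolding AA_def by simp
qed

lemma CC_nz: "n \<ge> 1 \<Longrightarrow> CC n \<noteq> 0"
  unfolding CC_def pow_aux using qv_ne0 qv_pow_ne1'(1)[of n] qv_pow_ne1'(1)[of "Suc (Suc (n*2))"]
  by simp

definition xa :: "nat \<Rightarrow> qrat" where "xa n = AA n / (EE n * (qv*(qv-1)))"
definition xb :: "nat \<Rightarrow> qrat" where "xb n = - (AA n + CC n) / (EE n * (qv*(qv-1))) - 1/qv"
definition xg :: "nat \<Rightarrow> qrat" where "xg n = CC n / (EE n * (qv*(qv-1)))"

lemma qq1_nz: "qv*(qv-1) \<noteq> 0" using qv_ne0 qv_ne1 by simp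

lemma xa_nz: "xa n \<noteq> 0" using AA_nz EE_nz qq1_nz by (simp add: xa_def)
lemma xg_nz: "n \<ge> 1 \<Longrightarrow> xg n \<noteq> 0" using CC_nz EE_nz qq1_nz by (simp add: xg_def)

lemma zm1_X: "(zz - 1) * p = smult (qv-1) p + smult (qv*(qv-1)) ([:0,1:] * p)"
proof -
  have "zz - 1 = [:qv - 1:] + smult (qv*(qv-1)) [:0,1:]"
    by (simp add: zz_alt one_pCons algebra_simps)
  hence "(zz - 1) * p = [:qv - 1:] * p + smult (qv*(qv-1)) ([:0,1:] * p)"
    by (simp only: distrib_right mult_smult_left)
  thus ?thesis by simp
qed

lemma xrec: "[:0,1:] * Pfam n = smult (xa n) (Pfam (Suc n)) + smult (xb n) (Pfam n) + smult (xg n) (Pfam (n - 1))"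
proof -
  define e where "e = EE n"
  define r where "r = qv*(qv-1)"
  have e: "e \<noteq> 0" using EE_nz by (simp add: e_def)
  have r: "r \<noteq> 0" using qq1_nz by (simp add: r_def)
  have "smult r ([:0,1:] * Pfam n) = (zz - 1) * Pfam n - smult (qv-1) (Pfam n)"
    by (simp add: zm1_X r_def)
  also have "(zz - 1) * Pfam n = smult (inverse e) (smult e ((zz - 1) * Pfam n))"
    using e by simp
  also have "smult e ((zz - 1) * Pfam n) = smult (AA n) (Pfam (Suc n)) - smult (AA n + CC n) (Pfam n) + smult (CC n) (Pfam (n - 1))"
    unfolding e_def by (rule recur)
  finally have *: "smult r ([:0,1:] * Pfam n) = smult (inverse e) (smult (AA n) (Pfam (Suc n)) - smult (AA n + CC n) (Pfam n) + smult (CC n) (Pfam (n - 1))) - smult (qv-1) (Pfam n)" .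
  have "[:0,1:] * Pfam n = smult (inverse r) (smult r ([:0,1:] * Pfam n))" using r by simp
  also note *
  also have "smult (inverse r) (smult (inverse e) (smult (AA n) (Pfam (Suc n)) - smult (AA n + CC n) (Pfam n) + smult (CC n) (Pfam (n - 1))) - smult (qv-1) (Pfam n))
     = smult (inverse r * (inverse e * AA n)) (Pfam (Suc n)) - smult (inverse r * (inverse e * (AA n + CC n))) (Pfam n)
       + smult (inverse r * (inverse e * CC n)) (Pfam (n - 1)) - smult (inverse r * (qv - 1)) (Pfam n)"
    by (simp only: smult_diff_right smult_add_right smult_smult)
  finally have **: "[:0,1:] * Pfam n = smult (inverse r * (inverse e * AA n)) (Pfam (Suc n)) - smult (inverse r * (inverse e * (AA n + CC n))) (Pfam n)
       + smult (inverse r * (inverse e * CC n)) (Pfam (n - 1)) - smult (inverse r * (qv - 1)) (Pfam n)" .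
  have c1: "inverse r * (inverse e * AA n) = xa n" by (simp add: xa_def e_def r_def field_simps)
  have c3: "inverse r * (inverse e * CC n) = xg n" by (simp add: xg_def e_def r_def field_simps)
  have h: "inverse r * (qv - 1) = 1/qv" using qv_ne1 qv_ne0 by (simp add: r_def field_simps)
  have c2a: "inverse r * (inverse e * (AA n + CC n)) = (AA n + CC n)/(EE n*(qv*(qv-1)))"
    by (simp add: e_def r_def divide_inverse mult_ac)
  have c2: "inverse r * (inverse e * (AA n + CC n)) = - xb n - inverse r * (qv - 1)"
    unfolding c2a h xb_def by (simp add: minus_divide_left)
  show ?thesis unfolding ** c1 c2 c3 by (simp add: smult_diff_left smult_add_left algebra_simps)
qed

lemma Pfam_0: "Pfam 0 = 1" by (simp add: Pfam_alt)

lemma L_smult_mult: "L (p * smult c r) = c * L (p * r)"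
  by (simp add: mf_smult)

lemma L_xrec: "L ([:0,1:]^j * ([:0,1:] * Pfam n)) = xa n * L ([:0,1:]^j * Pfam (Suc n)) + xb n * L ([:0,1:]^j * Pfam n) + xg n * L ([:0,1:]^j * Pfam (n - 1))"
  unfolding xrec by (simp add: distrib_left mf_add mf_smult)

lemma orth0: "j < n \<Longrightarrow> L ([:0,1:]^j * Pfam n) = 0"
proof (induction j arbitrary: n)
  case 0 thus ?case using L_Pfam[of n] by simp
next
  case (Suc j)
  have "L ([:0,1:]^Suc j * Pfam n) = L ([:0,1:]^j * ([:0,1:] * Pfam n))"
    by (simp add: power_Suc2 mult.assoc)
  also have "\<dots> = 0" unfolding L_xrec using Suc by simp
  finally show ?case .
qed

lemma bc_beta_0: "bc_beta 0 = 1"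
  using L_phi[of 0] qv_ne1 by (simp add: mf_one)

lemma normL: "L ([:0,1:]^n * Pfam n) \<noteq> 0"
proof (induction n)
  case 0 thus ?case by (simp add: Pfam_0 mf_one bc_beta_0)
next
  case (Suc n)
  have "L ([:0,1:]^Suc n * Pfam (Suc n)) = L ([:0,1:]^n * ([:0,1:] * Pfam (Suc n)))"
    by (simp add: power_Suc2 mult.assoc)
  also have "\<dots> = xg (Suc n) * L ([:0,1:]^n * Pfam n)"
    unfolding L_xrec using orth0[of n "Suc (Suc n)"] orth0[of n "Suc n"] by simp
  finally show ?case using Suc xg_nz[of "Suc n"] by simp
qed

lemma Pfam_nz: "Pfam n \<noteq> 0" using normL[of n] by (auto simp: mf_zero)

lemma deg_step:
  assumes d: "degree (Pfam n) = n" and d1: "degree (Pfam (n - 1)) \<le> n"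
  shows "degree (Pfam (Suc n)) = Suc n"
proof -
  have "smult (xa n) (Pfam (Suc n)) = [:0,1:] * Pfam n - smult (xb n) (Pfam n) - smult (xg n) (Pfam (n - 1))"
    unfolding xrec by simp
  moreover have "degree ([:0,1:] * Pfam n - smult (xb n) (Pfam n) - smult (xg n) (Pfam (n - 1))) = Suc n"
  proof -
    have X: "degree ([:0,1:] * Pfam n) = Suc n" using Pfam_nz[of n] d by simp
    have "degree (smult (xb n) (Pfam n) + smult (xg n) (Pfam (n - 1))) \<le> n"
      using d d1 by (intro degree_add_le) (auto intro: order.trans[OF degree_smult_le])
    hence "degree ([:0,1:] * Pfam n - (smult (xb n) (Pfam n) + smult (xg n) (Pfam (n - 1)))) = Suc n"
      using X by (simp only: diff_conv_add_uminus degree_add_eq_left degree_minus)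
    thus ?thesis by (simp add: algebra_simps)
  qed
  ultimately show ?thesis using xa_nz[of n] by (metis degree_smult_eq)
qed

lemma degree_Pfam: "degree (Pfam n) = n"
proof (induction n rule: less_induct)
  case (less n)
  show ?case
  proof (cases n)
    case 0 thus ?thesis by (simp add: Pfam_0)
  next
    case (Suc m)
    have "degree (Pfam m) = m" using less Suc by simp
    moreover have "degree (Pfam (m - 1)) \<le> m"
      using less[of "m - 1"] Suc by (cases m) (auto simp: Pfam_0)
    ultimately show ?thesis using deg_step Suc by simp
  qed
qed

lemma L_mult_expand: "L (p * r) = (\<Sum>t\<le>degree p. coeff p t * L ([:0,1:]^t * r))"
proof -
  have "p * r = (\<Sum>t\<le>degree p. smult (coeff p t) ([:0,1:]^t * r))"
    by (subst (1) poly_as_sum_of_monoms[of p, symmetric])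
       (simp add: monom_altdef sum_distrib_right)
  thus ?thesis by (simp add: mf_sum mf_smult)
qed

lemma orth_lt:
  assumes "i < j" shows "L (Pfam i * Pfam j) = 0"
proof -
  have "\<forall>t\<in>{..i}. coeff (Pfam i) t * L ([:0,1:]^t * Pfam j) = 0"
  proof
    fix t assume "t \<in> {..i}"
    hence "t < j" using assms by simp
    thus "coeff (Pfam i) t * L ([:0,1:]^t * Pfam j) = 0" by (simp add: orth0)
  qed
  hence "(\<Sum>t\<le>i. coeff (Pfam i) t * L ([:0,1:]^t * Pfam j)) = 0" by (rule sum.neutral)
  moreover have "L (Pfam i * Pfam j) = (\<Sum>t\<le>i. coeff (Pfam i) t * L ([:0,1:]^t * Pfam j))"
    using L_mult_expand[of "Pfam i" "Pfam j"] by (simp only: degree_Pfam)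
  ultimately show ?thesis by simp
qed

theorem mainTheorem1:
  shows "is_moment_sequence bc_beta Pfam"
  unfolding is_moment_sequence_def
proof (intro conjI allI impI)
  show "bc_beta 0 = 1" by (rule bc_beta_0)
next
  fix n show "degree (Pfam n) = n" by (rule degree_Pfam)
next
  fix i j :: nat assume ij: "i \<noteq> j"
  show "moment_functional bc_beta (Pfam i * Pfam j) = 0"
  proof (cases "i < j")
    case True thus ?thesis by (rule orth_lt)
  next
    case False
    hence "j < i" using ij by simp
    hence "L (Pfam j * Pfam i) = 0" by (rule orth_lt)
    thus ?thesis by (simp only: mult.commute)
  qed
next
  fix n
  have e1: "L (Pfam n * Pfam n) = (\<Sum>t\<le>n. coeff (Pfam n) t * L ([:0,1:]^t * Pfam n))"
    using L_mult_expand[of "Pfam n" "Pfam n"] by (simp only: degree_Pfam)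
  have e2: "(\<Sum>t\<le>n. coeff (Pfam n) t * L ([:0,1:]^t * Pfam n)) = coeff (Pfam n) n * L ([:0,1:]^n * Pfam n) + (\<Sum>t\<in>{..n} - {n}. coeff (Pfam n) t * L ([:0,1:]^t * Pfam n))"
    by (rule sum.remove) auto
  have e3: "(\<Sum>t\<in>{..n} - {n}. coeff (Pfam n) t * L ([:0,1:]^t * Pfam n)) = 0"
  proof (rule sum.neutral, rule ballI)
    fix t assume "t \<in> {..n} - {n}"
    hence "t < n" by auto
    thus "coeff (Pfam n) t * L ([:0,1:]^t * Pfam n) = 0" by (simp add: orth0)
  qed
  have c: "coeff (Pfam n) n \<noteq> 0" using Pfam_nz[of n] degree_Pfam[of n] by (metis leading_coeff_0_iff)
  show "moment_functional bc_beta (Pfam n * Pfam n) \<noteq> 0"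
    using e1 e2 e3 c normL[of n] by simp
qed

end
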